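(* Let $X=\min\{g_{sr},g_{sd}\}$ and $$\bar C_{s_1,\mathrm{SC}}:=\tfrac12\,\mathbb E\Big[\log_2\Big(1+\tfrac{a_1\rho X}{a_2\rho X+1}\Big)\Big]=\tfrac12\,\mathbb E\big[\log_2(1+\rho X)-\log_2(1+a_2\rho X)\big].$$ Then \begin{align*} \bar C_{s_1,\mathrm{SC}}=\frac{1}{2\ln 2}&\sum_{\substack{k_0+\cdots+k_{m_{sr}}=N_r\\ k_0\neq N_r}}\ \sum_{\substack{l_0+\cdots+l_{m_{sd}}=N_d\\ l_0\neq N_d}}\binom{N_r}{k_0,\ldots,k_{m_{sr}}}\binom{N_d}{l_0,\ldots,l_{m_{sd}}}(-1)^{N_r+N_d-k_0-l_0}\\ &\times\Big\{\prod_{\mu=0}^{m_{sr}-1}\Big(\tfrac{1}{\mu!}\Big)^{k_{\mu+1}}\Big\}\Big(\tfrac{m_{sr}}{\Omega_{sr}}\Big)^{\tau}\Big\{\prod_{\nu=0}^{m_{sd}-1}\Big(\tfrac{1}{\nu!}\Big)^{l_{\nu+1}}\Big\}\Big(\tfrac{m_{sd}}{\Omega_{sd}}\Big)^{\omega}\frac{\Gamma(\tau+\omega+1)}{\rho^{\tau+\omega}}\\ &\times\Big\{e^{\Psi_{k_0,l_0}/\rho}\,\Gamma\Big[-\tau-\omega,\tfrac{\Psi_{k_0,l_0}}{\rho}\Big]-\frac{1}{a_2^{\tau+\omega}}e^{\Psi_{k_0,l_0}/(\rho a_2)}\,\Gamma\Big[-\tau-\omega,\tfrac{\Psi_{k_0,l_0}}{\rho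 a_2}\Big]\Big\}, \end{align*} where $\tau=\sum_{\mu=0}^{m_{sr}-1}\mu k_{\mu+1}$, $\omega=\sum_{\nu=0}^{m_{sd}-1}\nu l_{\nu+1}$ and $\Psi_{k_0,l_0}=\frac{(N_r-k_0)m_{sr}}{\Omega_{sr}}+\frac{(N_d-l_0)m_{sd}}{\Omega_{sd}}$.
   Context: Let $N_r,N_d$ be positive integers, $m_{sr},m_{sd},m_{rd}$ positive integers, and $\Omega_{sr},\Omega_{sd},\Omega_{rd}>0$. Let $\{G_{sr,i}\}_{i=1}^{N_r}$, $\{G_{sd,j}\}_{j=1}^{N_d}$, $\{G_{rd,k}\}_{k=1}^{N_d}$ be mutually independent random variables, where each $G_{sr,i}$ has the Gamma density $f(x)=\frac{(m_{sr}/\Omega_{sr})^{m_{sr}}x^{m_{sr}-1}}{\Gamma(m_{sr})}e^{-m_{sr}x/\Omega_{sr}}$, $x>0$ (shape $m_{sr}$, mean $\Omega_{sr}$; these are the squared magnitudes of Nakagami-$m$ channel gains), and analogously $G_{sd,j}$ with parameters $(m_{sd},\Omega_{sd})$ and $G_{rd,k}$ with $(m_{rd},\Omega_{rd})$. Selection combining (SC) gains: $g_{sr}=\max_i G_{sr,i}$, $g_{sd}=\max_j G_{sd,j}$, $g_{rd}=\max_k G_{rd,k}$. Let $\rho>0$ (transmit SNR) and power-allocation coefficients $a_1,a_2\in(0,1)$ with $a_1+a_2=1$, $a_1>a_2$. Sums $\sum_{k_0+\cdots+k_{m}=N,\,k_0\neq N}$ run over tuples of nonnegative integers $(k_0,\dots,k_m)$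 summing to $N$ with $k_0\ne N$, and $\binom{N}{k_0,\ldots,k_m}$ is the multinomial coefficient. $\Gamma(\cdot)$ is the Gamma function and $\Gamma[s,z]=\int_z^\infty t^{s-1}e^{-t}\,dt$ ($z>0$, any real $s$) is the upper incomplete Gamma function. *)

theory Defs
  imports "HOL-Probability.Probability"
begin

text \<open>Gamma density with shape m and mean Omega (squared Nakagami-m gain).\<close>
definition gamma_dens :: "nat \<Rightarrow> real \<Rightarrow> real \<Rightarrow> real" where
  "gamma_dens m \<Omega> x =
     (if x > 0 then (real m / \<Omega>) ^ m * x ^ (m - 1) / Gamma (real m) * exp (- real m * x / \<Omega>)
      else 0)"

definition upper_Gamma :: "real \<Rightarrow> real \<Rightarrow> real" where
  "upper_Gamma s z = (LBINT t:{z<..}. t powr (s - 1) * exp (- t))"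

definition tuples :: "nat \<Rightarrow> nat \<Rightarrow> (nat \<Rightarrow> nat) set" where
  "tuples N m = {k \<in> {..m} \<rightarrow>\<^sub>E {..N}. (\<Sum>i\<le>m. k i) = N \<and> k 0 \<noteq> N}"

definition multinom :: "nat \<Rightarrow> nat \<Rightarrow> (nat \<Rightarrow> nat) \<Rightarrow> real" where
  "multinom N m k = fact N / (\<Prod>i\<le>m. fact (k i))"

end

theory Submission
  imports Defs
begin


lemma pow_exp_hbi:
  assumes "0 < (\<Psi>::real)"
  shows "has_bochner_integral lborel (\<lambda>x. indicator {0..} x * x^n * exp(-\<Psi>*x)) (fact n / \<Psi>^(Suc n))"
proof (rule has_bochner_integral_nn_integral)
  have "(\<integral>\<^sup>+x. ennreal (indicator {0..} x * x^n * exp(-\<Psi>*x)) \<partial>lborel)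
      = (\<integral>\<^sup>+x. ennreal (1/\<Psi>) * ennreal (erlang_density 0 \<Psi> x * x^n) \<partial>lborel)"
    using assms by (intro nn_integral_cong) (auto simp: erlang_density_def ennreal_mult'[symmetric] split: split_indicator)
  also have "\<dots> = ennreal (1/\<Psi>) * (\<integral>\<^sup>+x. ennreal (erlang_density 0 \<Psi> x * x^n) \<partial>lborel)"
    by (rule nn_integral_cmult) auto
  also have "\<dots> = ennreal (fact n / \<Psi>^(Suc n))"
    using assms nn_integral_erlang_ith_moment[OF assms, of 0 n] by (simp add: ennreal_mult'[symmetric] field_simps)
  finally show "(\<integral>\<^sup>+x. ennreal (indicator {0..} x * x^n * exp(-\<Psi>*x)) \<partial>lborel) = ennreal (fact n / \<Psi>^(Suc n))" .
qed (use assms in \<open>auto split: split_indicator\<close>)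

lemma pow_exp_int: assumes "0 < (\<Psi>::real)" shows "integrable lborel (\<lambda>x. indicator {0..} x * x^n * exp(-\<Psi>*x))"
  using pow_exp_hbi[OF assms] by (auto simp: has_bochner_integral_iff)

lemma pow_exp_integral: assumes "0 < (\<Psi>::real)" shows "integral\<^sup>L lborel (\<lambda>x. indicator {0..} x * x^n * exp(-\<Psi>*x)) = fact n / \<Psi>^(Suc n)"
  using pow_exp_hbi[OF assms] by (rule has_bochner_integral_integral_eq)

definition Dint :: "nat \<Rightarrow> real \<Rightarrow> real \<Rightarrow> real" where
  "Dint n \<Psi> \<beta> = integral\<^sup>L lborel (\<lambda>x. indicator {0..} x * (\<beta> * x^n * exp(-\<Psi>*x) / (1+\<beta>*x)))"

lemma D_integrable:
  fixes \<Psi> \<beta> :: real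
  assumes "0 < \<Psi>" "0 < \<beta>"
  shows "integrable lborel (\<lambda>x. indicator {0..} x * (\<beta> * x^n * exp(-\<Psi>*x) / (1+\<beta>*x)))"
proof (rule Bochner_Integration.integrable_bound)
  show "integrable lborel (\<lambda>x. \<beta> * (indicator {0..} x * x^n * exp(-\<Psi>*x)))"
    using pow_exp_int[OF assms(1)] by (rule integrable_mult_right)
  show "AE x in lborel. norm (indicator {0..} x * (\<beta> * x^n * exp(-\<Psi>*x) / (1+\<beta>*x)))
          \<le> norm (\<beta> * (indicator {0..} x * x^n * exp(-\<Psi>*x)))"
  proof (rule AE_I2)
    fix x :: real
    show "norm (indicator {0..} x * (\<beta> * x^n * exp(-\<Psi>*x) / (1+\<beta>*x)))
          \<le> norm (\<beta> * (indicator {0..} x * x^n * exp(-\<Psi>*x)))"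
    proof (cases "0 \<le> x")
      case True
      have "1 \<le> 1 + \<beta>*x" using True assms by simp
      moreover have "0 \<le> \<beta> * x^n * exp(-\<Psi>*x)" using True assms by simp
      ultimately have "\<beta> * x^n * exp(-\<Psi>*x) / (1+\<beta>*x) \<le> \<beta> * x^n * exp(-\<Psi>*x)"
        by (simp add: divide_le_eq mult_le_cancel_left1)
      then show ?thesis using True assms by (simp add: abs_mult)
    qed simp
  qed
qed measurable

lemma D_rec:
  assumes "0 < \<Psi>" "0 < \<beta>"
  shows "Dint (Suc n) \<Psi> \<beta> = fact n / \<Psi>^(Suc n) - Dint n \<Psi> \<beta> / \<beta>"
proof -
  have "Dint (Suc n) \<Psi> \<beta> = integral\<^sup>L lborel (\<lambda>x. indicator {0..} x * x^n * exp(-\<Psi>*x)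
       - (1/\<beta>) * (indicator {0..} x * (\<beta> * x^n * exp(-\<Psi>*x) / (1+\<beta>*x))))"
    unfolding Dint_def
  proof (intro Bochner_Integration.integral_cong refl)
    fix x :: real
    show "indicator {0..} x * (\<beta> * x ^ Suc n * exp (- \<Psi> * x) / (1 + \<beta> * x)) =
         indicator {0..} x * x ^ n * exp (- \<Psi> * x) -
         1 / \<beta> * (indicator {0..} x * (\<beta> * x ^ n * exp (- \<Psi> * x) / (1 + \<beta> * x)))"
    proof (cases "0 \<le> x")
      case True
      then have "1 + \<beta> * x \<noteq> 0" using assms by (smt (verit) mult_nonneg_nonneg)
      then show ?thesis using True assms by (simp add: field_simps)
    qed simp
  qed
  also have "\<dots> = fact n / \<Psi>^(Suc n) - (1/\<beta>) * Dint n \<Psi> \<beta>"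
    unfolding Dint_def
    by (simp only: Bochner_Integration.integral_diff[OF pow_exp_int[OF assms(1)] integrable_mult_right[OF D_integrable[OF assms]]]
          integral_mult_right_zero pow_exp_integral[OF assms(1)])
  finally show ?thesis by simp
qed

lemma Gamma_nn:
  assumes "0 < z"
  shows "upper_Gamma s z = enn2real (\<integral>\<^sup>+t. ennreal (indicator {z..} t * (t powr (s-1) * exp(-t))) \<partial>lborel)"
proof -
  have "upper_Gamma s z = integral\<^sup>L lborel (\<lambda>t. indicator {z<..} t * (t powr (s-1) * exp(-t)))"
    unfolding upper_Gamma_def set_lebesgue_integral_def by simp
  also have "\<dots> = enn2real (\<integral>\<^sup>+t. ennreal (indicator {z<..} t * (t powr (s-1) * exp(-t))) \<partial>lborel)"
    by (rule integral_eq_nn_integral) (auto split: split_indicator)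
  also have "(\<integral>\<^sup>+t. ennreal (indicator {z<..} t * (t powr (s-1) * exp(-t))) \<partial>lborel)
      = (\<integral>\<^sup>+t. ennreal (indicator {z..} t * (t powr (s-1) * exp(-t))) \<partial>lborel)"
    by (intro nn_integral_cong_AE) (use AE_lborel_singleton[of z] in \<open>auto split: split_indicator elim!: eventually_mono\<close>)
  finally show ?thesis .
qed

lemma powr_neg_nat: "0 < (u::real) \<Longrightarrow> u powr (- real k - 1) = 1 / u^(Suc k)"
proof -
  assume u: "0 < u"
  have "- real k - 1 = - real (Suc k)" by simp
  have "u powr (- real k - 1) * u powr (real (Suc k)) = 1" using u by (simp add: powr_add[symmetric])
  then have "u powr (- real k - 1) = inverse (u powr real (Suc k))" using u by (simp add: field_simps)
  also have "\<dots> = 1 / u^(Suc k)" using u by (simp add: powr_realpow divide_inverse del: of_nat_Suc power_Suc)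
  finally show ?thesis .
qed

lemma exp_over_pow_lim: "((\<lambda>u::real. exp(-u) / u^k) \<longlongrightarrow> 0) at_top"
proof (rule tendsto_sandwich)
  show "\<forall>\<^sub>F u in at_top. 0 \<le> exp(-u) / (u::real)^k"
    unfolding eventually_at_top_linorder by (intro exI[of _ "0::real"] allI impI) simp
  show "\<forall>\<^sub>F u in at_top. exp(-u) / (u::real)^k \<le> 1 / exp u"
  proof (rule eventually_mono[OF eventually_ge_at_top[of 1]])
    fix u :: real assume "1 \<le> u"
    then have "1 \<le> u^k" by simp
    then show "exp(-u) / (u::real)^k \<le> 1 / exp u"
      by (simp add: exp_minus divide_inverse) (simp add: field_simps)
  qed
  show "((\<lambda>u::real. 1 / exp u) \<longlongrightarrow> 0) at_top"
    using tendsto_power_div_exp_0[of 0] by simp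
qed simp

lemma e2_alg:
  fixes x P E r :: real
  assumes "0 < x" "0 < P"
  shows "- ((- (E * (x * P)) - E * (P + r * P)) / (x * P * (x * P))) = E / (x * P) + (1 + r) * E / (x * (x * P))"
proof -
  have a: "E * (x * P) + E * (P + r * P) = P * (E * x + E * (1 + r))" by (simp add: algebra_simps)
  have b: "x * P * (x * P) = P * (x * (x * P))" by (simp add: algebra_simps)
  have c: "E * x / (x * (x * P)) = E / (x * P)" using assms by simp
  have "- ((- (E * (x * P)) - E * (P + r * P)) / (x * P * (x * P))) = (E * (x * P) + E * (P + r * P)) / (x * P * (x * P))"
  proof -
    have "-(-(E*(x*P)) - E*(P+r*P)) = E*(x*P) + E*(P+r*P)" by simp
    then show ?thesis by (simp only: minus_divide_left)
  qed
  also have "\<dots> = (E * x + E * (1 + r)) / (x * (x * P))"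
    unfolding a b using assms by simp
  also have "\<dots> = E / (x * P) + (1 + r) * E / (x * (x * P))"
    unfolding add_divide_distrib c by (simp add: mult.commute)
  finally show ?thesis .
qed

lemma Gamma_rec:
  assumes z: "0 < z"
  shows "real (Suc n) * upper_Gamma (- real (Suc n)) z + upper_Gamma (- real n) z = exp(-z) / z^(Suc n)"
proof -
  define A where "A = (\<integral>\<^sup>+t. ennreal (indicator {z..} t * (t powr (- real (Suc n) - 1) * exp(-t))) \<partial>lborel)"
  define B where "B = (\<integral>\<^sup>+t. ennreal (indicator {z..} t * (t powr (- real n - 1) * exp(-t))) \<partial>lborel)"
  define f where "f = (\<lambda>u::real. exp(-u)/u^(Suc n) + real (Suc n) * exp(-u)/u^(Suc (Suc n)))"
  have ftc: "(\<integral>\<^sup>+x. ennreal (f x) * indicator {z ..} x \<partial>lborel) = 0 - (- exp(-z)/z^(Suc n))"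
  proof (rule nn_integral_FTC_atLeast)
    show "f \<in> borel_measurable borel" unfolding f_def by measurable
    fix x assume x: "z \<le> x"
    then have "0 < x" using z by simp
    have e: "real n * x^(n - Suc 0) * x = real n * x^n" by (cases n) auto
    have e2: "- ((- (exp (- x) * (x * x ^ n)) - exp (- x) * (x ^ n + real n * x ^ n)) / (x * x ^ n * (x * x ^ n)))
       = f x" unfolding f_def using e2_alg[OF \<open>0 < x\<close> zero_less_power[OF \<open>0 < x\<close>, of n], of "exp (-x)" "real n"]
      by (simp only: power_Suc of_nat_Suc)
    show "((\<lambda>u. - exp(-u)/u^(Suc n)) has_real_derivative f x) (at x)"
      using \<open>0 < x\<close> by (auto intro!: derivative_eq_intros simp: e e2)
    show "0 \<le> f x" unfolding f_def using \<open>0 < x\<close> by simp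
  next
    show "((\<lambda>u::real. - exp(-u)/u^(Suc n)) \<longlongrightarrow> 0) at_top"
      using tendsto_minus[OF exp_over_pow_lim[of "Suc n"]] by (simp only: minus_divide_left minus_zero)
  qed
  have "ennreal (exp(-z)/z^(Suc n)) = (\<integral>\<^sup>+x. ennreal (f x) * indicator {z ..} x \<partial>lborel)"
    unfolding ftc by simp
  also have "(\<integral>\<^sup>+x. ennreal (f x) * indicator {z ..} x \<partial>lborel)
     = (\<integral>\<^sup>+x. ennreal (indicator {z..} x * (x powr (- real n - 1) * exp(-x))) +
            ennreal (real (Suc n)) * ennreal (indicator {z..} x * (x powr (- real (Suc n) - 1) * exp(-x))) \<partial>lborel)"
  proof (intro nn_integral_cong)
    fix x :: real
    show "ennreal (f x) * indicator {z ..} x = ennreal (indicator {z..} x * (x powr (- real n - 1) * exp(-x))) +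
            ennreal (real (Suc n)) * ennreal (indicator {z..} x * (x powr (- real (Suc n) - 1) * exp(-x)))"
    proof (cases "z \<le> x")
      case True
      then have x0: "0 < x" using z by simp
      have p1: "x powr (- real n - 1) = 1/x^(Suc n)" by (rule powr_neg_nat[OF x0])
      have p2: "x powr (- real (Suc n) - 1) = 1/x^(Suc (Suc n))" by (rule powr_neg_nat[OF x0])
      have i1: "indicator {z..} x = (1::real)" "indicator {z..} x = (1::ennreal)" using True by auto
      have fx: "f x = 1/x^(Suc n) * exp(-x) + real (Suc n) * (1/x^(Suc (Suc n)) * exp(-x))"
        unfolding f_def by simp
      have "ennreal (f x) = ennreal (1/x^(Suc n) * exp(-x)) + ennreal (real (Suc n) * (1/x^(Suc (Suc n)) * exp(-x)))"
        unfolding fx by (rule ennreal_plus) (use x0 in auto)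
      also have "ennreal (real (Suc n) * (1/x^(Suc (Suc n)) * exp(-x))) = ennreal (real (Suc n)) * ennreal (1/x^(Suc (Suc n)) * exp(-x))"
        by (rule ennreal_mult) (use x0 in auto)
      finally show ?thesis unfolding i1 p1 p2 by simp
    qed simp
  qed
  also have "\<dots> = B + (\<integral>\<^sup>+x. ennreal (real (Suc n)) * ennreal (indicator {z..} x * (x powr (- real (Suc n) - 1) * exp(-x))) \<partial>lborel)"
    unfolding B_def by (rule nn_integral_add) measurable
  also have "(\<integral>\<^sup>+x. ennreal (real (Suc n)) * ennreal (indicator {z..} x * (x powr (- real (Suc n) - 1) * exp(-x))) \<partial>lborel)
      = ennreal (real (Suc n)) * A"
    unfolding A_def by (rule nn_integral_cmult) measurable
  finally have eq: "B + ennreal (real (Suc n)) * A = ennreal (exp(-z)/z^(Suc n))" by (rule sym)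
  then have "B + ennreal (real (Suc n)) * A < top" by simp
  then have Bf: "B < top" and Af': "ennreal (real (Suc n)) * A < top"
    by (auto simp: ennreal_add_less_top)
  have "exp(-z)/z^(Suc n) = enn2real (B + ennreal (real (Suc n)) * A)"
    unfolding eq using z by simp
  also have "\<dots> = enn2real B + enn2real (ennreal (real (Suc n)) * A)"
    by (rule enn2real_plus[OF Bf Af'])
  also have "\<dots> = enn2real B + real (Suc n) * enn2real A"
    by (simp only: enn2real_mult enn2real_ennreal of_nat_0_le_iff)
  finally have *: "exp(-z)/z^(Suc n) = enn2real B + real (Suc n) * enn2real A" .
  have gA: "upper_Gamma (- real (Suc n)) z = enn2real A" unfolding A_def by (rule Gamma_nn[OF z])
  have gB: "upper_Gamma (- real n) z = enn2real B" unfolding B_def by (rule Gamma_nn[OF z])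
  show ?thesis unfolding gA gB * by simp
qed

lemma D_base:
  assumes P: "0 < \<Psi>" and b: "0 < \<beta>"
  shows "Dint 0 \<Psi> \<beta> = exp (\<Psi>/\<beta>) * upper_Gamma 0 (\<Psi>/\<beta>)"
proof -
  define z where "z = \<Psi>/\<beta>"
  have z: "0 < z" using P b by (simp add: z_def)
  define g where "g = (\<lambda>x. indicator {0..} x * (\<beta> * x^0 * exp(-\<Psi>*x) / (1+\<beta>*x)))"
  have "Dint 0 \<Psi> \<beta> = enn2real (\<integral>\<^sup>+x. ennreal (g x) \<partial>lborel)"
    unfolding Dint_def g_def
    by (rule integral_eq_nn_integral) (use b in \<open>auto split: split_indicator\<close>)
  have "(\<integral>\<^sup>+t. ennreal (indicator {z..} t * (t powr (0-1) * exp(-t))) \<partial>lborel)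
     = ennreal \<bar>\<Psi>\<bar> * (\<integral>\<^sup>+x. ennreal (indicator {z..} (z + \<Psi>*x) * ((z + \<Psi>*x) powr (0-1) * exp(-(z + \<Psi>*x)))) \<partial>lborel)"
    by (rule nn_integral_real_affine) (use P in auto)
  also have "\<dots> = (\<integral>\<^sup>+x. ennreal \<bar>\<Psi>\<bar> * ennreal (indicator {z..} (z + \<Psi>*x) * ((z + \<Psi>*x) powr (0-1) * exp(-(z + \<Psi>*x)))) \<partial>lborel)"
    by (rule nn_integral_cmult[symmetric]) measurable
  also have "\<dots> = (\<integral>\<^sup>+x. ennreal (exp (-z)) * ennreal (g x) \<partial>lborel)"
  proof (intro nn_integral_cong)
    fix x :: real
    show "ennreal \<bar>\<Psi>\<bar> * ennreal (indicator {z..} (z + \<Psi>*x) * ((z + \<Psi>*x) powr (0-1) * exp(-(z + \<Psi>*x))))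
        = ennreal (exp (-z)) * ennreal (g x)"
    proof (cases "0 \<le> x")
      case True
      then have pos: "0 < z + \<Psi>*x" using z P by (smt (verit) mult_nonneg_nonneg)
      have e1: "z + \<Psi>*x = \<Psi>*(1+\<beta>*x)/\<beta>" using b by (simp add: z_def field_simps)
      have e2: "exp(-(z + \<Psi>*x)) = exp(-z) * exp(-\<Psi>*x)" by (simp add: exp_add[symmetric])
      have p1: "0 < 1+\<beta>*x" using True b by (smt (verit) mult_nonneg_nonneg)
      have key: "\<Psi> * (1 / (z + \<Psi>*x) * exp(-(z + \<Psi>*x))) = exp (-z) * (\<beta> * exp(-\<Psi>*x) / (1+\<beta>*x))"
        unfolding e2 unfolding e1 using p1 b P mult_pos_pos[OF P p1] by (simp add: field_simps)
      have lhs: "indicator {z..} (z + \<Psi>*x) * ((z + \<Psi>*x) powr (0-1) * exp(-(z + \<Psi>*x))) = 1 / (z + \<Psi>*x) * exp(-(z + \<Psi>*x))"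
        using pos True P by (simp add: powr_minus divide_inverse)
      have rhs: "g x = \<beta> * exp(-\<Psi>*x) / (1+\<beta>*x)" using True by (simp add: g_def)
      have "ennreal \<bar>\<Psi>\<bar> * ennreal (1 / (z + \<Psi>*x) * exp(-(z + \<Psi>*x))) = ennreal (\<Psi> * (1 / (z + \<Psi>*x) * exp(-(z + \<Psi>*x))))"
        using P pos by (simp add: ennreal_mult[symmetric])
      also have "\<dots> = ennreal (exp (-z) * (\<beta> * exp(-\<Psi>*x) / (1+\<beta>*x)))" by (simp only: key)
      also have "\<dots> = ennreal (exp (-z)) * ennreal (\<beta> * exp(-\<Psi>*x) / (1+\<beta>*x))"
        by (rule ennreal_mult) (use p1 b in auto)
      finally show ?thesis unfolding lhs rhs .
    next
      case False
      then have "\<not> z \<le> z + \<Psi> * x" using P by (simp add: not_le mult_pos_neg)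
      then show ?thesis using False by (simp add: g_def)
    qed
  qed
  also have "\<dots> = ennreal (exp (-z)) * (\<integral>\<^sup>+x. ennreal (g x) \<partial>lborel)"
    by (rule nn_integral_cmult) (simp add: g_def)
  finally have "upper_Gamma 0 z = exp(-z) * enn2real (\<integral>\<^sup>+x. ennreal (g x) \<partial>lborel)"
    unfolding Gamma_nn[OF z] by (simp add: enn2real_mult)
  then show ?thesis
    using \<open>Dint 0 \<Psi> \<beta> = _\<close> by (simp add: z_def exp_minus field_simps)
qed

lemma D_alg:
  fixes \<beta> z E G :: real
  assumes "\<beta>>0" "z>0" "E>0"
  shows "fact n / (\<beta>*z)^(Suc n) - fact n / \<beta>^n * E * G / \<beta> = fact (Suc n) / \<beta>^(Suc n) * E * ((inverse E / z^(Suc n) - G) / real (Suc n))"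
proof -
  have f: "(fact (Suc n) :: real) = real (Suc n) * fact n" by (simp del: of_nat_Suc)
  show ?thesis unfolding f using assms by (simp add: field_simps power_mult_distrib del: of_nat_Suc fact_Suc)
qed

lemma D_formula:
  assumes P: "0 < \<Psi>" and b: "0 < \<beta>"
  shows "Dint n \<Psi> \<beta> = fact n / \<beta>^n * exp (\<Psi>/\<beta>) * upper_Gamma (- real n) (\<Psi>/\<beta>)"
proof (induction n)
  case 0
  then show ?case using D_base[OF P b] by simp
next
  case (Suc n)
  define z where "z = \<Psi>/\<beta>"
  have z: "0 < z" using P b by (simp add: z_def)
  have bz: "\<beta> * z = \<Psi>" using b by (simp add: z_def)
  have G: "upper_Gamma (- real (Suc n)) z = (exp(-z) / z^(Suc n) - upper_Gamma (- real n) z) / real (Suc n)"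
    using Gamma_rec[OF z, of n] by (simp add: field_simps del: of_nat_Suc)
  have "Dint (Suc n) \<Psi> \<beta> = fact n / \<Psi>^(Suc n) - fact n / \<beta>^n * exp z * upper_Gamma (- real n) z / \<beta>"
    using D_rec[OF P b, of n] Suc by (simp add: z_def)
  also have "\<dots> = fact (Suc n) / \<beta>^(Suc n) * exp z * upper_Gamma (- real (Suc n)) z"
    unfolding G bz[symmetric] exp_minus
    by (rule D_alg) (use z b in auto)
  finally show ?case by (simp add: z_def)
qed




definition Tup :: "nat \<Rightarrow> nat \<Rightarrow> (nat \<Rightarrow> nat) set" where
  "Tup m N = {k \<in> {..m} \<rightarrow>\<^sub>E {..N}. (\<Sum>i\<le>m. k i) = N}"

lemma Tup_0: "Tup 0 N = {(\<lambda>_. undefined)(0 := N)}"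
  unfolding Tup_def by (auto simp: PiE_iff extensional_def fun_eq_iff)

lemma finite_Tup: "finite (Tup m N)"
  unfolding Tup_def by (rule finite_subset[OF _ finite_PiE[of "{..m}" "\<lambda>_. {..N}"]]) auto

lemma multinom_Suc:
  assumes k: "k \<in> Tup m (N - j)" and j: "j \<le> N"
  shows "multinom N (Suc m) (k(Suc m := j)) = real (N choose j) * multinom (N - j) m k"
proof -
  have "(\<Prod>i\<le>Suc m. fact ((k(Suc m := j)) i)) = (\<Prod>i\<le>m. fact (k i)) * (fact j :: real)"
    by (simp add: prod.atMost_Suc)
  moreover have "real (N choose j) = fact N / (fact j * fact (N - j))"
    using j by (simp add: binomial_fact)
  moreover have "(\<Prod>i\<le>m. fact (k i)) \<noteq> (0::real)" by simp
  ultimately show ?thesis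
    unfolding multinom_def by (simp add: field_simps)
qed

lemma Tup_bij:
  fixes F :: "(nat \<Rightarrow> nat) \<Rightarrow> real"
  shows "(\<Sum>k'\<in>Tup (Suc m) N. F k') = (\<Sum>(j,k)\<in>Sigma {..N} (\<lambda>j. Tup m (N - j)). F (k(Suc m := j)))"
proof (rule sum.reindex_bij_witness[where j = "\<lambda>k'. (k' (Suc m), restrict k' {..m})" and i = "\<lambda>(j,k). k(Suc m := j)"], goal_cases)
  case (3 a)
  then obtain j k where a: "a = (j, k)" "j \<le> N" "k \<in> Tup m (N - j)" by auto
  then have "k \<in> extensional {..m}" unfolding Tup_def by (auto simp: PiE_iff)
  then show ?case using a by (auto simp: fun_eq_iff extensional_def)
next
  case (4 a)
  then obtain j k where a: "a = (j, k)" "j \<le> N" "k \<in> Tup m (N - j)" by auto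
  then have kk: "k \<in> {..m} \<rightarrow>\<^sub>E {..N-j}" "(\<Sum>i\<le>m. k i) = N - j" unfolding Tup_def by auto
  have "\<forall>i\<le>Suc m. (k(Suc m := j)) i \<le> N"
  proof (intro allI impI)
    fix i assume "i \<le> Suc m"
    then show "(k(Suc m := j)) i \<le> N"
    proof (cases "i = Suc m")
      case False
      then have "i \<le> m" using \<open>i \<le> Suc m\<close> by simp
      then have "k i \<le> N - j" using kk(1) by auto
      then show ?thesis using False by simp
    qed (use a in simp)
  qed
  then show ?case using a kk unfolding Tup_def
    by (auto simp: PiE_iff extensional_def sum.atMost_Suc)
next
  case (1 b)
  then have "b \<in> extensional {..Suc m}" unfolding Tup_def by (auto simp: PiE_iff)
  then show ?case by (auto simp: fun_eq_iff extensional_def)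
next
  case (2 b)
  then have b: "b \<in> {..Suc m} \<rightarrow>\<^sub>E {..N}" "(\<Sum>i\<le>Suc m. b i) = N" unfolding Tup_def by auto
  then have s: "(\<Sum>i\<le>m. b i) + b (Suc m) = N" by (simp add: sum.atMost_Suc)
  have le: "b i \<le> N - b (Suc m)" if "i \<le> m" for i
  proof -
    have "b i \<le> (\<Sum>i\<le>m. b i)" using that by (intro member_le_sum) auto
    then show ?thesis using s by simp
  qed
  have "(\<Sum>i\<le>m. restrict b {..m} i) = (\<Sum>i\<le>m. b i)" by simp
  then show ?case using s le unfolding Tup_def
    by (auto simp: PiE_iff)
next
  case (5 b)
  then have "b \<in> extensional {..Suc m}" unfolding Tup_def by (auto simp: PiE_iff)
  then have "(restrict b {..m})(Suc m := b (Suc m)) = b" by (auto simp: fun_eq_iff extensional_def)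
  then show ?case by simp
qed

lemma sum_cong_Sigma:
  assumes "\<And>j k. j \<in> A \<Longrightarrow> k \<in> T j \<Longrightarrow> f j k = g j k"
  shows "(\<Sum>(j,k)\<in>Sigma A T. f j k) = (\<Sum>(j,k)\<in>Sigma A T. (g j k :: real))"
  using assms by (intro sum.cong) auto

lemma multinomial:
  fixes a :: "nat \<Rightarrow> real"
  shows "(\<Sum>i\<le>m. a i) ^ N = (\<Sum>k\<in>Tup m N. multinom N m k * (\<Prod>i\<le>m. a i ^ k i))"
proof (induction m arbitrary: N)
  case 0
  then show ?case by (simp add: Tup_0 multinom_def)
next
  case (Suc m)
  have "(\<Sum>i\<le>Suc m. a i) ^ N = (a (Suc m) + (\<Sum>i\<le>m. a i)) ^ N"
    by (simp add: sum.atMost_Suc add.commute)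
  also have "\<dots> = (\<Sum>j\<le>N. real (N choose j) * a (Suc m) ^ j * (\<Sum>i\<le>m. a i) ^ (N - j))"
    by (rule binomial_ring)
  also have "\<dots> = (\<Sum>j\<le>N. \<Sum>k\<in>Tup m (N - j). real (N choose j) * a (Suc m) ^ j * (multinom (N - j) m k * (\<Prod>i\<le>m. a i ^ k i)))"
    by (simp add: Suc sum_distrib_left)
  also have "\<dots> = (\<Sum>(j,k)\<in>Sigma {..N} (\<lambda>j. Tup m (N - j)). real (N choose j) * a (Suc m) ^ j * (multinom (N - j) m k * (\<Prod>i\<le>m. a i ^ k i)))"
    by (rule sum.Sigma) (auto simp: finite_Tup)
  also have "\<dots> = (\<Sum>(j,k)\<in>Sigma {..N} (\<lambda>j. Tup m (N - j)). multinom N (Suc m) (k(Suc m := j)) * (\<Prod>i\<le>Suc m. a i ^ (k(Suc m := j)) i))"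
  proof (rule sum_cong_Sigma)
    fix j k assume jk: "j \<in> {..N}" "k \<in> Tup m (N - j)"
    have p: "(\<Prod>i\<le>Suc m. a i ^ (k(Suc m := j)) i) = (\<Prod>i\<le>m. a i ^ k i) * a (Suc m) ^ j"
      by (simp add: prod.atMost_Suc)
    show "real (N choose j) * a (Suc m) ^ j * (multinom (N - j) m k * (\<Prod>i\<le>m. a i ^ k i)) =
          multinom N (Suc m) (k(Suc m := j)) * (\<Prod>i\<le>Suc m. a i ^ (k(Suc m := j)) i)"
      using jk unfolding p multinom_Suc[OF jk(2) jk(1)[simplified]] by simp
  qed
  also have "\<dots> = (\<Sum>k\<in>Tup (Suc m) N. multinom N (Suc m) k * (\<Prod>i\<le>Suc m. a i ^ k i))"
    by (rule Tup_bij[symmetric])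
  finally show ?case .
qed

definition Fcdf :: "nat \<Rightarrow> real \<Rightarrow> real \<Rightarrow> real" where
  "Fcdf m c t = 1 - (\<Sum>\<mu><m. (c*t)^\<mu> * exp(-c*t) / fact \<mu>)"

definition tau :: "nat \<Rightarrow> (nat \<Rightarrow> nat) \<Rightarrow> nat" where
  "tau m k = (\<Sum>\<mu><m. \<mu> * k (\<mu> + 1))"

definition Coef :: "nat \<Rightarrow> nat \<Rightarrow> real \<Rightarrow> (nat \<Rightarrow> nat) \<Rightarrow> real" where
  "Coef N m c k = multinom N m k * (-1)^(N - k 0 + 1) * (\<Prod>\<mu><m. (1 / fact \<mu>) ^ k (\<mu> + 1)) * c ^ tau m k"

lemma finite_tuples: "finite (tuples N m)"
  unfolding tuples_def by (rule finite_subset[OF _ finite_PiE[of "{..m}" "\<lambda>_. {..N}"]]) auto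

lemma Tup_split:
  fixes N m :: nat
  defines "ks \<equiv> (\<lambda>i. if i = 0 then N else if i \<le> m then 0 else undefined)"
  shows "Tup m N = insert ks (tuples N m)" "ks \<notin> tuples N m"
proof -
  have "(\<Sum>i\<le>m. ks i) = (\<Sum>i\<le>m. if i = 0 then N else 0)"
    by (rule sum.cong) (auto simp: ks_def)
  also have "\<dots> = N" by (simp add: sum.delta)
  finally have ksum: "(\<Sum>i\<le>m. ks i) = N" .
  have "ks \<in> {..m} \<rightarrow>\<^sub>E {..N}" by (auto simp: ks_def PiE_iff extensional_def)
  then have ksT: "ks \<in> Tup m N" using ksum unfolding Tup_def by blast
  have ks0: "ks 0 = N" by (simp add: ks_def)
  have eqks: "k = ks" if k: "k \<in> Tup m N" "k 0 = N" for k
  proof -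
    have kk: "k \<in> {..m} \<rightarrow>\<^sub>E {..N}" "(\<Sum>i\<le>m. k i) = N" using k unfolding Tup_def by auto
    have "(\<Sum>i\<le>m. k i) = k 0 + (\<Sum>i\<in>{..m}-{0}. k i)" by (simp add: sum.remove)
    then have "(\<Sum>i\<in>{..m}-{0}. k i) = 0" using kk(2) k(2) by simp
    then have z: "\<forall>i\<in>{..m}-{0}. k i = 0" by simp
    show ?thesis
    proof
      fix i show "k i = ks i"
      proof (cases "i \<le> m")
        case True
        then show ?thesis using z k(2) unfolding ks_def by auto
      next
        case False
        then show ?thesis using kk(1) unfolding ks_def by (auto simp: PiE_iff extensional_def)
      qed
    qed
  qed
  have tT: "tuples N m = {k \<in> Tup m N. k 0 \<noteq> N}" unfolding tuples_def Tup_def by blast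
  show "Tup m N = insert ks (tuples N m)"
    unfolding tT using ksT eqks by blast
  show "ks \<notin> tuples N m" unfolding tT using ks0 by blast
qed

lemma tail_expand:
  fixes c t :: real
  shows "1 - (Fcdf m c t) ^ N = (\<Sum>k\<in>tuples N m. Coef N m c k * t ^ tau m k * exp (- (real (N - k 0) * c) * t))"
proof -
  define a where "a = (\<lambda>i. if i = 0 then 1 else - ((c*t)^(i-1) * exp(-c*t) / fact (i-1)))"
  define ks where "ks = (\<lambda>i. if i = 0 then N else if i \<le> m then 0 else undefined)"
  have F: "Fcdf m c t = (\<Sum>i\<le>m. a i)"
    unfolding Fcdf_def a_def by (simp add: sum.atMost_shift prod.atMost_shift sum_negf)
  have T: "Tup m N = insert ks (tuples N m)" "ks \<notin> tuples N m"
    using Tup_split[where N=N and m=m] unfolding ks_def by auto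
  have kst: "multinom N m ks * (\<Prod>i\<le>m. a i ^ ks i) = 1"
    unfolding multinom_def ks_def a_def by (simp add: sum.atMost_shift prod.atMost_shift)
  have trm: "- (multinom N m k * (\<Prod>i\<le>m. a i ^ k i)) = Coef N m c k * t ^ tau m k * exp (- (real (N - k 0) * c) * t)"
    if k: "k \<in> tuples N m" for k
  proof -
    have "k 0 + (\<Sum>\<mu><m. k (\<mu>+1)) = N"
      using k unfolding tuples_def by (simp add: sum.atMost_shift)
    then have S: "(\<Sum>\<mu><m. k (\<mu>+1)) = N - k 0" by linarith
    have fac: "a (\<mu>+1) ^ k (\<mu>+1) = (-1) ^ k (\<mu>+1) * ((1 / fact \<mu>) ^ k (\<mu> + 1) * (c ^ (\<mu> * k (\<mu> + 1)) * t ^ (\<mu> * k (\<mu> + 1)))) * exp (-c*t) ^ k (\<mu>+1)" for \<mu>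
    proof -
      have ha: "a (\<mu>+1) = (-1) * ((1 / fact \<mu>) * (c^\<mu> * t^\<mu>) * exp (-c*t))"
        unfolding a_def by (simp add: power_mult_distrib)
      show ?thesis by (simp only: ha power_mult_distrib power_mult[symmetric] mult.assoc)
    qed
    have "(\<Prod>i\<le>m. a i ^ k i) = (\<Prod>\<mu><m. a (\<mu>+1) ^ k (\<mu>+1))"
      by (simp add: prod.atMost_shift a_def)
    also have "\<dots> = (\<Prod>\<mu><m. (-1) ^ k (\<mu>+1)) * ((\<Prod>\<mu><m. (1 / fact \<mu>) ^ k (\<mu> + 1)) * ((\<Prod>\<mu><m. c ^ (\<mu> * k (\<mu> + 1))) * (\<Prod>\<mu><m. t ^ (\<mu> * k (\<mu> + 1))))) * (\<Prod>\<mu><m. exp (-c*t) ^ k (\<mu>+1))"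
      unfolding fac by (simp only: prod.distrib)
    also have "\<dots> = (-1) ^ (N - k 0) * ((\<Prod>\<mu><m. (1 / fact \<mu>) ^ k (\<mu> + 1)) * (c ^ tau m k * t ^ tau m k)) * exp (-c*t) ^ (N - k 0)"
      unfolding tau_def power_sum[symmetric] S ..
    also have "exp (-c*t) ^ (N - k 0) = exp (- (real (N - k 0) * c) * t)"
      by (simp add: exp_of_nat_mult[symmetric])
    finally show ?thesis unfolding Coef_def by (simp add: algebra_simps)
  qed
  have "(Fcdf m c t) ^ N = (\<Sum>k\<in>Tup m N. multinom N m k * (\<Prod>i\<le>m. a i ^ k i))"
    unfolding F by (rule multinomial)
  also have "\<dots> = 1 + (\<Sum>k\<in>tuples N m. multinom N m k * (\<Prod>i\<le>m. a i ^ k i))"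
    unfolding T(1) using T(2) finite_tuples kst by simp
  finally have "1 - (Fcdf m c t) ^ N = (\<Sum>k\<in>tuples N m. - (multinom N m k * (\<Prod>i\<le>m. a i ^ k i)))"
    by (simp add: sum_negf)
  also have "\<dots> = (\<Sum>k\<in>tuples N m. Coef N m c k * t ^ tau m k * exp (- (real (N - k 0) * c) * t))"
    by (rule sum.cong[OF refl]) (rule trm)
  finally show ?thesis .
qed




lemma gamma_dens_erlang:
  assumes "0 < m" "0 < \<Omega>"
  shows "AE x in lborel. ennreal (gamma_dens m \<Omega> x) = ennreal (erlang_density (m - 1) (real m / \<Omega>) x)"
  using AE_lborel_singleton[of 0]
proof (rule eventually_mono)
  fix x :: real assume x: "x \<noteq> 0"
  have G: "Gamma (real m) = fact (m - 1)"
    using Gamma_fact[of "m - 1"] assms(1) by (simp add: of_nat_diff)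
  have S: "Suc (m - 1) = m" using assms(1) by simp
  show "ennreal (gamma_dens m \<Omega> x) = ennreal (erlang_density (m - 1) (real m / \<Omega>) x)"
    using x unfolding gamma_dens_def erlang_density_def G S by (auto simp: field_simps)
qed

lemma gamma_cdf:
  assumes M: "prob_space M" and D: "distributed M lborel X (\<lambda>x. ennreal (gamma_dens m \<Omega> x))"
    and m: "0 < m" and O: "0 < \<Omega>" and t: "0 \<le> t"
  shows "measure M {w\<in>space M. X w \<le> t} = Fcdf m (real m / \<Omega>) t"
proof -
  interpret prob_space M by (rule M)
  have D': "distributed M lborel X (erlang_density (m - 1) (real m / \<Omega>))"
  proof -
    have "distributed M lborel X (\<lambda>x. ennreal (gamma_dens m \<Omega> x)) = distributed M lborel X (\<lambda>x. ennreal (erlang_density (m - 1) (real m / \<Omega>) x))"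
      by (rule distributed_cong_density[OF gamma_dens_erlang[OF m O]])
         (auto simp: gamma_dens_def[abs_def])
    then show ?thesis using D by simp
  qed
  have "measure M {w\<in>space M. X w \<le> t} = erlang_CDF (m - 1) (real m / \<Omega>) t"
    using erlang_distributed_le[OF D'] m O t by simp
  also have "\<dots> = Fcdf m (real m / \<Omega>) t"
  proof -
    have "{..m - 1} = {..<m}" using m by auto
    then show ?thesis unfolding erlang_CDF_def Fcdf_def using t by simp
  qed
  finally show ?thesis .
qed

lemma tail_formula:
  fixes Z :: "'a \<Rightarrow> real" and g H :: "real \<Rightarrow> real"
  assumes M: "prob_space M" and Zm[measurable]: "Z \<in> borel_measurable M" and Z0: "\<And>w. 0 \<le> Z w"
    and gm[measurable]: "g \<in> borel_measurable borel" and g0: "\<And>t. 0 \<le> t \<Longrightarrow> 0 \<le> g t"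
    and H: "\<And>t. 0 \<le> t \<Longrightarrow> DERIV H t :> g t" and H0: "H 0 = 0"
  shows "(\<integral>\<^sup>+w. ennreal (H (Z w)) \<partial>M) = (\<integral>\<^sup>+t. ennreal (g t) * indicator {0..} t * emeasure M {w\<in>space M. t < Z w} \<partial>lborel)"
proof -
  interpret prob_space M by (rule M)
  interpret P: pair_sigma_finite M lborel
    by (intro pair_sigma_finite.intro prob_space_imp_sigma_finite M sigma_finite_lborel)
  define F2 where "F2 = (\<lambda>w t. ennreal (g t) * (if 0 \<le> t \<and> t < Z w then 1 else 0))"
  have F2m: "case_prod F2 \<in> borel_measurable (M \<Otimes>\<^sub>M lborel)"
    unfolding F2_def by measurable
  have step1: "ennreal (H (Z w)) = (\<integral>\<^sup>+t. F2 w t \<partial>lborel)" for w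
  proof -
    have "(\<integral>\<^sup>+t. F2 w t \<partial>lborel) = (\<integral>\<^sup>+t. ennreal (g t) * indicator {0 .. Z w} t \<partial>lborel)"
      by (intro nn_integral_cong_AE)
         (use AE_lborel_singleton[of "Z w"] in \<open>auto simp: F2_def split: split_indicator elim!: eventually_mono\<close>)
    also have "\<dots> = ennreal (H (Z w) - H 0)"
      by (rule nn_integral_FTC_Icc) (use H g0 Z0 in auto)
    finally show ?thesis by (simp add: H0)
  qed
  have "(\<integral>\<^sup>+w. ennreal (H (Z w)) \<partial>M) = (\<integral>\<^sup>+w. (\<integral>\<^sup>+t. F2 w t \<partial>lborel) \<partial>M)"
    by (simp add: step1)
  also have "\<dots> = (\<integral>\<^sup>+t. (\<integral>\<^sup>+w. F2 w t \<partial>M) \<partial>lborel)"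
    by (rule P.Fubini'[OF F2m, symmetric])
  also have "\<dots> = (\<integral>\<^sup>+t. ennreal (g t) * indicator {0..} t * emeasure M {w\<in>space M. t < Z w} \<partial>lborel)"
  proof (rule nn_integral_cong)
    fix t :: real
    have "(\<integral>\<^sup>+w. F2 w t \<partial>M) = (\<integral>\<^sup>+w. (ennreal (g t) * indicator {0..} t) * indicator {w\<in>space M. t < Z w} w \<partial>M)"
      by (intro nn_integral_cong) (auto simp: F2_def split: split_indicator)
    also have "\<dots> = ennreal (g t) * indicator {0..} t * emeasure M {w\<in>space M. t < Z w}"
      by (rule nn_integral_cmult_indicator) measurable
    finally show "(\<integral>\<^sup>+w. F2 w t \<partial>M) = ennreal (g t) * indicator {0..} t * emeasure M {w\<in>space M. t < Z w}" .
  qed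
  finally show ?thesis .
qed

lemma indep_prob:
  fixes Y :: "'i \<Rightarrow> 'a \<Rightarrow> real"
  assumes M: "prob_space M" and ind: "prob_space.indep_vars M (\<lambda>_. borel) Y I"
    and J: "finite J" "J \<subseteq> I" "J \<noteq> {}"
  shows "measure M {w\<in>space M. \<forall>c\<in>J. Y c w \<le> t} = (\<Prod>c\<in>J. measure M {w\<in>space M. Y c w \<le> t})"
proof -
  interpret prob_space M by (rule M)
  have ie: "indep_events (\<lambda>c. {w\<in>space M. Y c w \<le> t}) I"
    by (rule indep_eventsI_indep_vars[OF ind]) measurable
  then have "prob (\<Inter>c\<in>J. {w\<in>space M. Y c w \<le> t}) = (\<Prod>c\<in>J. prob {w\<in>space M. Y c w \<le> t})"
    using J unfolding indep_events_def by auto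
  moreover have "(\<Inter>c\<in>J. {w\<in>space M. Y c w \<le> t}) = {w\<in>space M. \<forall>c\<in>J. Y c w \<le> t}" using J(3) by auto
  ultimately show ?thesis by simp
qed

lemma probX:
  fixes Gsr Gsd :: "nat \<Rightarrow> 'a \<Rightarrow> real"
  assumes M: "prob_space M"
    and Nr: "Nr > 0" and Nd: "Nd > 0" and mr: "msr > 0" and md: "msd > 0"
    and Or: "\<Omega>sr > 0" and Od: "\<Omega>sd > 0"
    and Dr: "\<And>i. i \<in> {1..Nr} \<Longrightarrow> distributed M lborel (Gsr i) (\<lambda>x. ennreal (gamma_dens msr \<Omega>sr x))"
    and Dd: "\<And>j. j \<in> {1..Nd} \<Longrightarrow> distributed M lborel (Gsd j) (\<lambda>x. ennreal (gamma_dens msd \<Omega>sd x))"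
    and ind: "prob_space.indep_vars M (\<lambda>_. borel)
           (\<lambda>c. case c of Inl i \<Rightarrow> Gsr i | Inr j \<Rightarrow> Gsd j) (Inl ` {1..Nr} \<union> Inr ` {1..Nd})"
    and t: "0 \<le> t"
  shows "measure M {w\<in>space M. t < min (Max ((\<lambda>i. Gsr i w) ` {1..Nr})) (Max ((\<lambda>j. Gsd j w) ` {1..Nd}))}
       = (1 - Fcdf msr (real msr / \<Omega>sr) t ^ Nr) * (1 - Fcdf msd (real msd / \<Omega>sd) t ^ Nd)"
proof -
  interpret prob_space M by (rule M)
  define Y where "Y = (\<lambda>c. case c of Inl i \<Rightarrow> Gsr i | Inr j \<Rightarrow> Gsd j)"
  define I where "I = Inl ` {1..Nr} \<union> Inr ` {1..Nd}"
  have ind': "indep_vars (\<lambda>_. borel) Y I" using ind unfolding Y_def I_def .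
  have mr_meas[measurable]: "\<And>i. i \<in> {1..Nr} \<Longrightarrow> Gsr i \<in> borel_measurable M"
    using distributed_measurable[OF Dr] by simp
  have md_meas[measurable]: "\<And>j. j \<in> {1..Nd} \<Longrightarrow> Gsd j \<in> borel_measurable M"
    using distributed_measurable[OF Dd] by simp
  define Fr where "Fr = Fcdf msr (real msr / \<Omega>sr) t"
  define Fd where "Fd = Fcdf msd (real msd / \<Omega>sd) t"
  define Ar where "Ar = {w\<in>space M. \<forall>c\<in>Inl ` {1..Nr}. Y c w \<le> t}"
  define Ad where "Ad = {w\<in>space M. \<forall>c\<in>Inr ` {1..Nd}. Y c w \<le> t}"
  have fin: "finite (Inl ` {1..Nr} :: (nat + nat) set)" "finite (Inr ` {1..Nd} :: (nat + nat) set)" by auto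
  have ne: "Inl ` {1..Nr} \<noteq> ({} :: (nat + nat) set)" "Inr ` {1..Nd} \<noteq> ({} :: (nat + nat) set)" using Nr Nd by auto
  have pr: "prob {w\<in>space M. Y (Inl i) w \<le> t} = Fr" if "i \<in> {1..Nr}" for i
    unfolding Y_def Fr_def using gamma_cdf[OF M Dr[OF that] mr Or t] by simp
  have pd: "prob {w\<in>space M. Y (Inr j) w \<le> t} = Fd" if "j \<in> {1..Nd}" for j
    unfolding Y_def Fd_def using gamma_cdf[OF M Dd[OF that] md Od t] by simp
  have PAr: "prob Ar = Fr ^ Nr"
  proof -
    have "prob Ar = (\<Prod>c\<in>Inl ` {1..Nr}. prob {w\<in>space M. Y c w \<le> t})"
      unfolding Ar_def by (rule indep_prob[OF M ind' fin(1) _ ne(1)]) (auto simp: I_def)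
    also have "\<dots> = (\<Prod>i\<in>{1..Nr}. prob {w\<in>space M. Y (Inl i) w \<le> t})"
      by (subst prod.reindex) (auto simp: inj_on_def)
    also have "\<dots> = (\<Prod>i\<in>{1..Nr}. Fr)" by (rule prod.cong) (auto simp: pr)
    finally show ?thesis by simp
  qed
  have PAd: "prob Ad = Fd ^ Nd"
  proof -
    have "prob Ad = (\<Prod>c\<in>Inr ` {1..Nd}. prob {w\<in>space M. Y c w \<le> t})"
      unfolding Ad_def by (rule indep_prob[OF M ind' fin(2) _ ne(2)]) (auto simp: I_def)
    also have "\<dots> = (\<Prod>j\<in>{1..Nd}. prob {w\<in>space M. Y (Inr j) w \<le> t})"
      by (subst prod.reindex) (auto simp: inj_on_def)
    also have "\<dots> = (\<Prod>j\<in>{1..Nd}. Fd)" by (rule prod.cong) (auto simp: pd)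
    finally show ?thesis by simp
  qed
  have PAB: "prob (Ar \<inter> Ad) = Fr ^ Nr * Fd ^ Nd"
  proof -
    have "Ar \<inter> Ad = {w\<in>space M. \<forall>c\<in>I. Y c w \<le> t}" unfolding Ar_def Ad_def I_def by auto
    then have "prob (Ar \<inter> Ad) = (\<Prod>c\<in>I. prob {w\<in>space M. Y c w \<le> t})"
      using indep_prob[OF M ind', of I t] ne unfolding I_def by auto
    also have "\<dots> = (\<Prod>c\<in>Inl ` {1..Nr}. prob {w\<in>space M. Y c w \<le> t}) * (\<Prod>c\<in>Inr ` {1..Nd}. prob {w\<in>space M. Y c w \<le> t})"
      unfolding I_def by (rule prod.union_disjoint) auto
    also have "\<dots> = prob Ar * prob Ad"
      unfolding Ar_def Ad_def
      by (simp only: indep_prob[OF M ind' fin(1) _ ne(1), symmetric] indep_prob[OF M ind' fin(2) _ ne(2), symmetric]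
          I_def Un_upper1 Un_upper2)
    finally show ?thesis using PAr PAd by simp
  qed
  have gr: "Max ((\<lambda>i. Gsr i w) ` {1..Nr}) \<le> t \<longleftrightarrow> (\<forall>c\<in>Inl ` {1..Nr}. Y c w \<le> t)" for w
    using Nr by (subst Max_le_iff) (auto simp: Y_def)
  have gd: "Max ((\<lambda>j. Gsd j w) ` {1..Nd}) \<le> t \<longleftrightarrow> (\<forall>c\<in>Inr ` {1..Nd}. Y c w \<le> t)" for w
    using Nd by (subst Max_le_iff) (auto simp: Y_def)
  have Arm: "Ar \<in> events"
  proof -
    have "Ar = {w\<in>space M. Max ((\<lambda>i. Gsr i w) ` {1..Nr}) \<le> t}" unfolding Ar_def gr ..
    also have "\<dots> \<in> events" by measurable
    finally show ?thesis .
  qed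
  have Adm: "Ad \<in> events"
  proof -
    have "Ad = {w\<in>space M. Max ((\<lambda>j. Gsd j w) ` {1..Nd}) \<le> t}" unfolding Ad_def gd ..
    also have "\<dots> \<in> events" by measurable
    finally show ?thesis .
  qed
  have "{w\<in>space M. t < min (Max ((\<lambda>i. Gsr i w) ` {1..Nr})) (Max ((\<lambda>j. Gsd j w) ` {1..Nd}))} = space M - (Ar \<union> Ad)"
    unfolding Ar_def Ad_def gr[symmetric] gd[symmetric] by auto
  then have "prob {w\<in>space M. t < min (Max ((\<lambda>i. Gsr i w) ` {1..Nr})) (Max ((\<lambda>j. Gsd j w) ` {1..Nd}))} = 1 - prob (Ar \<union> Ad)"
    using prob_compl[of "Ar \<union> Ad"] Arm Adm by auto
  also have "prob (Ar \<union> Ad) = prob Ar + prob Ad - prob (Ar \<inter> Ad)"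
    by (rule measure_Un3) (use Arm Adm in \<open>auto simp: fmeasurable_eq_sets\<close>)
  finally show ?thesis unfolding PAr PAd PAB Fr_def[symmetric] Fd_def[symmetric] by (simp add: algebra_simps)
qed




lemma Fcdf0: assumes "0 < m" shows "Fcdf m c 0 = 0"
proof -
  obtain m' where m: "m = Suc m'" using assms by (cases m) auto
  show ?thesis unfolding Fcdf_def m sum.lessThan_Suc_shift by simp
qed

definition Df :: "nat \<Rightarrow> real \<Rightarrow> real \<Rightarrow> real \<Rightarrow> real" where
  "Df n \<Psi> \<beta> t = indicator {0..} t * (\<beta> * t^n * exp(-\<Psi>*t) / (1+\<beta>*t))"

lemma Dint_Df: "Dint n \<Psi> \<beta> = integral\<^sup>L lborel (Df n \<Psi> \<beta>)"
  unfolding Dint_def Df_def[abs_def] ..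

lemma g_form:
  fixes \<rho> a2 t P :: real
  assumes "0 < \<rho>" "0 < a2" "0 \<le> t"
  shows "(\<rho>/(1+\<rho>*t) - a2*\<rho>/(1+a2*\<rho>*t)) * P = \<rho>*P/(1+\<rho>*t) - (\<rho>*a2)*P/(1+(\<rho>*a2)*t)"
  by (simp only: left_diff_distrib times_divide_eq_left mult.commute[of a2 \<rho>])

lemma g_nonneg:
  fixes \<rho> a2 t :: real
  assumes "0 < \<rho>" "0 < a2" "a2 < 1" "0 \<le> t"
  shows "0 \<le> \<rho>/(1+\<rho>*t) - a2*\<rho>/(1+a2*\<rho>*t)"
proof -
  have p1: "0 < 1+\<rho>*t" "0 < 1+a2*\<rho>*t" using assms by (auto intro: add_pos_nonneg)
  have "a2*\<rho>*(1+\<rho>*t) \<le> \<rho>*(1+a2*\<rho>*t)" using assms by (simp add: algebra_simps)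
  then have "a2*\<rho>/(1+a2*\<rho>*t) \<le> \<rho>/(1+\<rho>*t)" using p1 by (simp add: divide_simps)
  then show ?thesis by simp
qed

lemma H_deriv:
  fixes \<rho> a2 t :: real
  assumes "0 < \<rho>" "0 < a2" "0 \<le> t"
  shows "((\<lambda>z. ln (1 + \<rho>*z) - ln (1 + a2*\<rho>*z)) has_real_derivative (\<rho>/(1+\<rho>*t) - a2*\<rho>/(1+a2*\<rho>*t))) (at t)"
proof -
  have p1: "0 < 1+\<rho>*t" "0 < 1+a2*\<rho>*t" using assms by (auto intro: add_pos_nonneg)
  show ?thesis using p1 by (auto intro!: derivative_eq_intros)
qed

lemma H_nonneg:
  fixes \<rho> a2 z :: real
  assumes "0 < \<rho>" "0 < a2" "a2 < 1" "0 \<le> z"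
  shows "0 \<le> ln (1 + \<rho>*z) - ln (1 + a2*\<rho>*z)"
proof -
  have p1: "0 < 1+a2*\<rho>*z" using assms by (auto intro: add_pos_nonneg)
  have "a2*\<rho>*z \<le> \<rho>*z" using assms by (simp add: mult_right_mono)
  then show ?thesis using p1 by simp
qed

lemma tuples_pos: assumes "k \<in> tuples N m" shows "k 0 < N"
proof -
  have k: "k \<in> {..m} \<rightarrow>\<^sub>E {..N}" "k 0 \<noteq> N" using assms unfolding tuples_def by auto
  then have "k 0 \<le> N" by (auto simp: PiE_iff)
  then show ?thesis using k(2) by simp
qed

lemma G_expand:
  fixes \<rho> a2 t \<Omega>sr \<Omega>sd :: real and Nr Nd msr msd :: nat
  assumes r: "0 < \<rho>" and a: "0 < a2"
  defines "Psi \<equiv> (\<lambda>k l. real (Nr - k 0) * real msr / \<Omega>sr + real (Nd - l 0) * real msd / \<Omega>sd)"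
  shows "(\<rho>/(1+\<rho>*t) - a2*\<rho>/(1+a2*\<rho>*t)) * ((1 - Fcdf msr (real msr / \<Omega>sr) t ^ Nr) * (1 - Fcdf msd (real msd / \<Omega>sd) t ^ Nd)) * indicator {0..} t
    = (\<Sum>k\<in>tuples Nr msr. \<Sum>l\<in>tuples Nd msd. Coef Nr msr (real msr / \<Omega>sr) k * Coef Nd msd (real msd / \<Omega>sd) l *
         (Df (tau msr k + tau msd l) (Psi k l) \<rho> t - Df (tau msr k + tau msd l) (Psi k l) (\<rho>*a2) t))"
proof (cases "0 \<le> t")
  case False
  then show ?thesis by (simp add: Df_def)
next
  case True
  define cr where "cr = real msr / \<Omega>sr"
  define cd where "cd = real msd / \<Omega>sd"
  have trm: "(\<rho>/(1+\<rho>*t) - a2*\<rho>/(1+a2*\<rho>*t)) * ((Coef Nr msr cr k * t ^ tau msr k * exp (- (real (Nr - k 0) * cr) * t)) *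
        (Coef Nd msd cd l * t ^ tau msd l * exp (- (real (Nd - l 0) * cd) * t)))
      = Coef Nr msr cr k * Coef Nd msd cd l * (Df (tau msr k + tau msd l) (Psi k l) \<rho> t - Df (tau msr k + tau msd l) (Psi k l) (\<rho>*a2) t)" for k l
  proof -
    define n where "n = tau msr k + tau msd l"
    have e: "exp (- (real (Nr - k 0) * cr) * t) * exp (- (real (Nd - l 0) * cd) * t) = exp (- Psi k l * t)"
      unfolding Psi_def cr_def cd_def by (simp add: exp_add[symmetric] algebra_simps)
    have A: "(Coef Nr msr cr k * t ^ tau msr k * exp (- (real (Nr - k 0) * cr) * t)) *
        (Coef Nd msd cd l * t ^ tau msd l * exp (- (real (Nd - l 0) * cd) * t))
        = (Coef Nr msr cr k * Coef Nd msd cd l) * (t ^ n * exp (- Psi k l * t))"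
      unfolding n_def power_add e[symmetric] by (simp only: mult_ac)
    have D1: "Df n (Psi k l) \<rho> t = \<rho> * (t ^ n * exp (- Psi k l * t)) / (1+\<rho>*t)"
      unfolding Df_def using True by (simp add: mult.assoc)
    have D2: "Df n (Psi k l) (\<rho>*a2) t = (\<rho>*a2) * (t ^ n * exp (- Psi k l * t)) / (1+(\<rho>*a2)*t)"
      unfolding Df_def using True by (simp add: mult.assoc)
    show ?thesis
      unfolding n_def[symmetric] A
      by (simp only: mult.left_commute[of "\<rho>/(1+\<rho>*t) - a2*\<rho>/(1+a2*\<rho>*t)" "Coef Nr msr cr k * Coef Nd msd cd l" "t ^ n * exp (- Psi k l * t)"]
            g_form[OF r a True, of "t ^ n * exp (- Psi k l * t)"] D1[symmetric] D2[symmetric])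
  qed
  have "(\<rho>/(1+\<rho>*t) - a2*\<rho>/(1+a2*\<rho>*t)) * ((1 - Fcdf msr cr t ^ Nr) * (1 - Fcdf msd cd t ^ Nd)) * indicator {0..} t
     = (\<rho>/(1+\<rho>*t) - a2*\<rho>/(1+a2*\<rho>*t)) * ((\<Sum>k\<in>tuples Nr msr. Coef Nr msr cr k * t ^ tau msr k * exp (- (real (Nr - k 0) * cr) * t)) *
         (\<Sum>l\<in>tuples Nd msd. Coef Nd msd cd l * t ^ tau msd l * exp (- (real (Nd - l 0) * cd) * t)))"
    using True by (simp add: tail_expand)
  also have "\<dots> = (\<Sum>k\<in>tuples Nr msr. \<Sum>l\<in>tuples Nd msd. (\<rho>/(1+\<rho>*t) - a2*\<rho>/(1+a2*\<rho>*t)) * ((Coef Nr msr cr k * t ^ tau msr k * exp (- (real (Nr - k 0) * cr) * t)) *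
        (Coef Nd msd cd l * t ^ tau msd l * exp (- (real (Nd - l 0) * cd) * t))))"
    unfolding sum_product by (simp only: sum_distrib_left)
  also have "\<dots> = (\<Sum>k\<in>tuples Nr msr. \<Sum>l\<in>tuples Nd msd. Coef Nr msr cr k * Coef Nd msd cd l *
         (Df (tau msr k + tau msd l) (Psi k l) \<rho> t - Df (tau msr k + tau msd l) (Psi k l) (\<rho>*a2) t))"
    by (simp only: trm)
  finally show ?thesis unfolding cr_def cd_def .
qed

lemma fin_alg:
  fixes mr md s1 s2 pr pd cr cd F E1 E2 U1 U2 \<rho> a2 :: real
  assumes "0 < \<rho>" "0 < a2"
  shows "(mr * s1 * pr * cr) * (md * s2 * pd * cd) * (F / \<rho>^n * E1 * U1 - F / (\<rho>*a2)^n * E2 * U2)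
   = mr * md * (s1 * s2) * pr * cr * pd * cd * F / \<rho>^n * (E1 * U1 - 1 / a2^n * E2 * U2)"
  using assms by (simp add: field_simps power_mult_distrib)

lemma sign_eq:
  assumes "a \<le> (N::nat)" "b \<le> (M::nat)"
  shows "(-1::real)^(N - a + 1) * (-1)^(M - b + 1) = (-1)^(N + M - a - b)"
proof -
  have "N + M - a - b = (N - a) + (M - b)" using assms by simp
  then show ?thesis by (simp add: power_add)
qed

lemma term_eq:
  fixes \<rho> a2 \<Omega>sr \<Omega>sd :: real
  assumes r: "0 < \<rho>" and a: "0 < a2" and Or: "0 < \<Omega>sr" and Od: "0 < \<Omega>sd" and mr: "0 < msr"
    and k: "k \<in> tuples Nr msr" and l: "l \<in> tuples Nd msd"
  defines "\<Psi> \<equiv> real (Nr - k 0) * real msr / \<Omega>sr + real (Nd - l 0) * real msd / \<Omega>sd"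
  defines "n \<equiv> tau msr k + tau msd l"
  shows "Coef Nr msr (real msr / \<Omega>sr) k * Coef Nd msd (real msd / \<Omega>sd) l * (Dint n \<Psi> \<rho> - Dint n \<Psi> (\<rho>*a2))
    = multinom Nr msr k * multinom Nd msd l * (-1) ^ (Nr + Nd - k 0 - l 0)
            * (\<Prod>\<mu><msr. (1 / fact \<mu>) ^ k (\<mu> + 1)) * (real msr / \<Omega>sr) ^ tau msr k
            * (\<Prod>\<nu><msd. (1 / fact \<nu>) ^ l (\<nu> + 1)) * (real msd / \<Omega>sd) ^ tau msd l
            * Gamma (real n + 1) / \<rho> ^ n
            * (exp (\<Psi> / \<rho>) * upper_Gamma (- real n) (\<Psi> / \<rho>)
               - 1 / a2 ^ n * exp (\<Psi> / (\<rho> * a2))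
                 * upper_Gamma (- real n) (\<Psi> / (\<rho> * a2)))"
proof -
  have k0: "k 0 < Nr" using tuples_pos[OF k] .
  have l0: "l 0 \<le> Nd" using tuples_pos[OF l] by simp
  have "0 < real (Nr - k 0) * real msr / \<Omega>sr" using k0 mr Or by simp
  moreover have "0 \<le> real (Nd - l 0) * real msd / \<Omega>sd" using Od by simp
  ultimately have P: "0 < \<Psi>" unfolding \<Psi>_def by linarith
  have ra: "0 < \<rho> * a2" using r a by simp
  have G: "Gamma (real n + 1) = fact n" using Gamma_fact[of n] by (simp add: add.commute)
  show ?thesis
    unfolding D_formula[OF P r] D_formula[OF P ra] G Coef_def
      sign_eq[OF less_imp_le[OF k0] l0, symmetric]
    by (rule fin_alg[OF r a])
qed




theorem theorem1:
  fixes M :: "'a measure"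
    and Gsr Gsd :: "nat \<Rightarrow> 'a \<Rightarrow> real"
    and Nr Nd msr msd :: nat
    and \<Omega>sr \<Omega>sd \<rho> a1 a2 :: real
  assumes "prob_space M"
    and "Nr > 0" "Nd > 0" "msr > 0" "msd > 0"
    and "\<Omega>sr > 0" "\<Omega>sd > 0" "\<rho> > 0"
    and "0 < a1" "a1 < 1" "0 < a2" "a2 < 1" "a1 + a2 = 1" "a1 > a2"
    and "\<And>i. i \<in> {1..Nr} \<Longrightarrow> distributed M lborel (Gsr i) (\<lambda>x. ennreal (gamma_dens msr \<Omega>sr x))"
    and "\<And>j. j \<in> {1..Nd} \<Longrightarrow> distributed M lborel (Gsd j) (\<lambda>x. ennreal (gamma_dens msd \<Omega>sd x))"
    and "prob_space.indep_vars M (\<lambda>_. borel)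
           (\<lambda>c. case c of Inl i \<Rightarrow> Gsr i | Inr j \<Rightarrow> Gsd j) (Inl ` {1..Nr} \<union> Inr ` {1..Nd})"
  shows
   "(let gsr = (\<lambda>w. Max ((\<lambda>i. Gsr i w) ` {1..Nr}));
         gsd = (\<lambda>w. Max ((\<lambda>j. Gsd j w) ` {1..Nd}));
         X = (\<lambda>w. min (gsr w) (gsd w))
     in 1/2 * (\<integral>w. log 2 (1 + a1 * \<rho> * X w / (a2 * \<rho> * X w + 1)) \<partial>M))
    = 1 / (2 * ln 2) *
      (\<Sum>k\<in>tuples Nr msr. \<Sum>l\<in>tuples Nd msd.
        (let \<tau> = (\<Sum>\<mu><msr. \<mu> * k (\<mu> + 1));
             \<omega> = (\<Sum>\<nu><msd. \<nu> * l (\<nu> + 1));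
             \<Psi> = real (Nr - k 0) * real msr / \<Omega>sr + real (Nd - l 0) * real msd / \<Omega>sd
         in multinom Nr msr k * multinom Nd msd l * (-1) ^ (Nr + Nd - k 0 - l 0)
            * (\<Prod>\<mu><msr. (1 / fact \<mu>) ^ k (\<mu> + 1)) * (real msr / \<Omega>sr) ^ \<tau>
            * (\<Prod>\<nu><msd. (1 / fact \<nu>) ^ l (\<nu> + 1)) * (real msd / \<Omega>sd) ^ \<omega>
            * Gamma (real (\<tau> + \<omega>) + 1) / \<rho> ^ (\<tau> + \<omega>)
            * (exp (\<Psi> / \<rho>) * upper_Gamma (- real (\<tau> + \<omega>)) (\<Psi> / \<rho>)
               - 1 / a2 ^ (\<tau> + \<omega>) * exp (\<Psi> / (\<rho> * a2))
                 * upper_Gamma (- real (\<tau> + \<omega>)) (\<Psi> / (\<rho> * a2)))))"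
proof -
  interpret prob_space M by (rule assms(1))
  have r: "0 < \<rho>" and a2: "0 < a2" "a2 < 1" and a12: "a1 = 1 - a2"
    using assms(8,11,12,13) by auto
  define X where "X = (\<lambda>w. min (Max ((\<lambda>i. Gsr i w) ` {1..Nr})) (Max ((\<lambda>j. Gsd j w) ` {1..Nd})))"
  define Z where "Z = (\<lambda>w. max 0 (X w))"
  define H where "H = (\<lambda>z::real. ln (1 + \<rho>*z) - ln (1 + a2*\<rho>*z))"
  define g where "g = (\<lambda>t::real. \<rho>/(1+\<rho>*t) - a2*\<rho>/(1+a2*\<rho>*t))"
  define Q where "Q = (\<lambda>t. (1 - Fcdf msr (real msr / \<Omega>sr) t ^ Nr) * (1 - Fcdf msd (real msd / \<Omega>sd) t ^ Nd))"
  define Psi where "Psi = (\<lambda>(k::nat\<Rightarrow>nat) (l::nat\<Rightarrow>nat). real (Nr - k 0) * real msr / \<Omega>sr + real (Nd - l 0) * real msd / \<Omega>sd)"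
  define Ct where "Ct = (\<lambda>k l. Coef Nr msr (real msr / \<Omega>sr) k * Coef Nd msd (real msd / \<Omega>sd) l)"
  define nn where "nn = (\<lambda>k l. tau msr k + tau msd l)"
  have mr_meas[measurable]: "\<And>i. i \<in> {1..Nr} \<Longrightarrow> Gsr i \<in> borel_measurable M"
    using distributed_measurable[OF assms(15)] by simp
  have md_meas[measurable]: "\<And>j. j \<in> {1..Nd} \<Longrightarrow> Gsd j \<in> borel_measurable M"
    using distributed_measurable[OF assms(16)] by simp
  have Xm[measurable]: "X \<in> borel_measurable M" unfolding X_def by measurable
  have Zm[measurable]: "Z \<in> borel_measurable M" unfolding Z_def by measurable
  have PX: "prob {w\<in>space M. t < X w} = Q t" if "0 \<le> t" for t
    unfolding X_def Q_def by (rule probX[OF assms(1-7) assms(15) assms(16) assms(17) that])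
  have Qnn: "0 \<le> Q t" if "0 \<le> t" for t
    using PX[OF that] measure_nonneg[of M] by metis
  have AEX: "AE w in M. 0 < X w"
  proof -
    have "prob {w\<in>space M. 0 < X w} = 1"
      using PX[of 0] Fcdf0[OF assms(4)] Fcdf0[OF assms(5)] assms(2,3) by (simp add: Q_def power_0_left)
    then show ?thesis by (rule AE_prob_1[THEN eventually_mono]) auto
  qed
  have gm[measurable]: "g \<in> borel_measurable borel" unfolding g_def by measurable
  have Hm[measurable]: "H \<in> borel_measurable borel" unfolding H_def by measurable
  have tail: "(\<integral>\<^sup>+w. ennreal (H (Z w)) \<partial>M) = (\<integral>\<^sup>+t. ennreal (g t) * indicator {0..} t * emeasure M {w\<in>space M. t < Z w} \<partial>lborel)"
  proof (rule tail_formula[OF assms(1) Zm])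
    show "\<And>w. 0 \<le> Z w" unfolding Z_def by simp
    show "\<And>t. 0 \<le> t \<Longrightarrow> 0 \<le> g t" unfolding g_def using g_nonneg[OF r a2] by blast
    show "\<And>t. 0 \<le> t \<Longrightarrow> (H has_real_derivative g t) (at t)" unfolding g_def H_def using H_deriv[OF r a2(1)] by blast
    show "H 0 = 0" unfolding H_def by simp
  qed (rule gm)
  have G_eq: "(\<integral>\<^sup>+t. ennreal (g t) * indicator {0..} t * emeasure M {w\<in>space M. t < Z w} \<partial>lborel)
      = (\<integral>\<^sup>+t. ennreal (g t * Q t * indicator {0..} t) \<partial>lborel)"
  proof (rule nn_integral_cong)
    fix t :: real
    show "ennreal (g t) * indicator {0..} t * emeasure M {w\<in>space M. t < Z w} = ennreal (g t * Q t * indicator {0..} t)"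
    proof (cases "0 \<le> t")
      case True
      have "{w\<in>space M. t < Z w} = {w\<in>space M. t < X w}" using True unfolding Z_def by auto
      then have "emeasure M {w\<in>space M. t < Z w} = ennreal (Q t)"
        using PX[OF True] by (simp add: emeasure_eq_measure)
      moreover have "0 \<le> g t" unfolding g_def using g_nonneg[OF r a2 True] .
      ultimately show ?thesis using True Qnn[OF True] by (simp add: ennreal_mult)
    qed simp
  qed
  have intH: "(\<integral>w. H (Z w) \<partial>M) = (\<integral>t. g t * Q t * indicator {0..} t \<partial>lborel)"
  proof -
    have "(\<integral>w. H (Z w) \<partial>M) = enn2real (\<integral>\<^sup>+w. ennreal (H (Z w)) \<partial>M)"
    proof (rule integral_eq_nn_integral)
      show "(\<lambda>w. H (Z w)) \<in> borel_measurable M" by measurable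
      show "AE w in M. 0 \<le> H (Z w)" unfolding H_def Z_def using H_nonneg[OF r a2] by auto
    qed
    also have "\<dots> = enn2real (\<integral>\<^sup>+t. ennreal (g t * Q t * indicator {0..} t) \<partial>lborel)"
      unfolding tail G_eq ..
    also have "\<dots> = (\<integral>t. g t * Q t * indicator {0..} t \<partial>lborel)"
    proof (rule enn2real_nn_integral_eq_integral)
      show "AE t in lborel. 0 \<le> g t * Q t * indicator {0..} t"
        using Qnn g_nonneg[OF r a2] unfolding g_def by (auto split: split_indicator)
      show "(\<lambda>t. g t * Q t * indicator {0..} t) \<in> borel_measurable lborel"
        unfolding Q_def Fcdf_def by measurable
    qed simp
    finally show ?thesis .
  qed
  have Gexp: "g t * Q t * indicator {0..} t = (\<Sum>k\<in>tuples Nr msr. \<Sum>l\<in>tuples Nd msd.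
        Ct k l * (Df (nn k l) (Psi k l) \<rho> t - Df (nn k l) (Psi k l) (\<rho>*a2) t))" for t
    unfolding g_def Q_def Ct_def Psi_def nn_def by (rule G_expand[OF r a2(1)])
  have Psi_pos: "0 < Psi k l" if k: "k \<in> tuples Nr msr" for k l
  proof -
    have k0: "k 0 < Nr" using tuples_pos[OF k] .
    have "0 < real (Nr - k 0) * real msr / \<Omega>sr" using k0 assms(4,6) by simp
    moreover have "0 \<le> real (Nd - l 0) * real msd / \<Omega>sd" using assms(7) by simp
    ultimately show ?thesis unfolding Psi_def by linarith
  qed
  have Dfi: "integrable lborel (Df n (Psi k l) \<beta>)" if "k \<in> tuples Nr msr" "0 < \<beta>" for k l n \<beta>
    using D_integrable[OF Psi_pos[OF that(1)] that(2)] unfolding Df_def[abs_def] .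
  have intG: "(\<integral>t. g t * Q t * indicator {0..} t \<partial>lborel) = (\<Sum>k\<in>tuples Nr msr. \<Sum>l\<in>tuples Nd msd.
        Ct k l * (Dint (nn k l) (Psi k l) \<rho> - Dint (nn k l) (Psi k l) (\<rho>*a2)))"
  proof -
    have ra: "0 < \<rho> * a2" using r a2 by simp
    have "(\<integral>t. g t * Q t * indicator {0..} t \<partial>lborel) = (\<integral>t. (\<Sum>k\<in>tuples Nr msr. \<Sum>l\<in>tuples Nd msd.
        Ct k l * (Df (nn k l) (Psi k l) \<rho> t - Df (nn k l) (Psi k l) (\<rho>*a2) t)) \<partial>lborel)"
      unfolding Gexp ..
    also have "\<dots> = (\<Sum>k\<in>tuples Nr msr. (\<integral>t. (\<Sum>l\<in>tuples Nd msd.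
        Ct k l * (Df (nn k l) (Psi k l) \<rho> t - Df (nn k l) (Psi k l) (\<rho>*a2) t)) \<partial>lborel))"
      by (rule Bochner_Integration.integral_sum) (use Dfi r ra in auto)
    also have "\<dots> = (\<Sum>k\<in>tuples Nr msr. \<Sum>l\<in>tuples Nd msd. (\<integral>t.
        Ct k l * (Df (nn k l) (Psi k l) \<rho> t - Df (nn k l) (Psi k l) (\<rho>*a2) t) \<partial>lborel))"
      by (intro sum.cong refl Bochner_Integration.integral_sum) (use Dfi r ra in auto)
    also have "\<dots> = (\<Sum>k\<in>tuples Nr msr. \<Sum>l\<in>tuples Nd msd.
        Ct k l * (Dint (nn k l) (Psi k l) \<rho> - Dint (nn k l) (Psi k l) (\<rho>*a2)))"
      unfolding Dint_Df
      by (intro sum.cong refl) (simp add: Bochner_Integration.integral_diff Dfi r ra)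
    finally show ?thesis .
  qed
  have LHSeq: "(\<integral>w. log 2 (1 + a1 * \<rho> * X w / (a2 * \<rho> * X w + 1)) \<partial>M) = (\<integral>w. H (Z w) \<partial>M) / ln 2"
  proof -
    have "(\<integral>w. log 2 (1 + a1 * \<rho> * X w / (a2 * \<rho> * X w + 1)) \<partial>M) = (\<integral>w. H (Z w) / ln 2 \<partial>M)"
    proof (rule integral_cong_AE)
      show "(\<lambda>w. log 2 (1 + a1 * \<rho> * X w / (a2 * \<rho> * X w + 1))) \<in> borel_measurable M" by measurable
      show "(\<lambda>w. H (Z w) / ln 2) \<in> borel_measurable M" by measurable
      show "AE w in M. log 2 (1 + a1 * \<rho> * X w / (a2 * \<rho> * X w + 1)) = H (Z w) / ln 2"
        using AEX
      proof (rule eventually_mono)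
        fix w assume x: "0 < X w"
        define x where "x = X w"
        have x0: "0 < x" using x by (simp add: x_def)
        have p1: "0 < 1 + \<rho>*x" "0 < 1 + a2*\<rho>*x" "0 < a2*\<rho>*x + 1" using x0 r a2 by (auto intro: add_pos_nonneg)
        have "1 + a1 * \<rho> * x / (a2 * \<rho> * x + 1) = (1 + \<rho>*x) / (1 + a2*\<rho>*x)"
          using p1 unfolding a12 by (simp add: field_simps)
        then have "log 2 (1 + a1 * \<rho> * x / (a2 * \<rho> * x + 1)) = (ln (1 + \<rho>*x) - ln (1 + a2*\<rho>*x)) / ln 2"
          using p1 by (simp add: log_def ln_div)
        moreover have "Z w = x" using x0 unfolding Z_def x_def by simp
        ultimately show "log 2 (1 + a1 * \<rho> * X w / (a2 * \<rho> * X w + 1)) = H (Z w) / ln 2"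
          unfolding H_def x_def by simp
      qed
    qed
    then show ?thesis by simp
  qed
  have sums: "(\<Sum>k\<in>tuples Nr msr. \<Sum>l\<in>tuples Nd msd.
        Ct k l * (Dint (nn k l) (Psi k l) \<rho> - Dint (nn k l) (Psi k l) (\<rho>*a2)))
     = (\<Sum>k\<in>tuples Nr msr. \<Sum>l\<in>tuples Nd msd.
        (let \<tau> = (\<Sum>\<mu><msr. \<mu> * k (\<mu> + 1));
             \<omega> = (\<Sum>\<nu><msd. \<nu> * l (\<nu> + 1));
             \<Psi> = real (Nr - k 0) * real msr / \<Omega>sr + real (Nd - l 0) * real msd / \<Omega>sd
         in multinom Nr msr k * multinom Nd msd l * (-1) ^ (Nr + Nd - k 0 - l 0)
            * (\<Prod>\<mu><msr. (1 / fact \<mu>) ^ k (\<mu> + 1)) * (real msr / \<Omega>sr) ^ \<tau>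
            * (\<Prod>\<nu><msd. (1 / fact \<nu>) ^ l (\<nu> + 1)) * (real msd / \<Omega>sd) ^ \<omega>
            * Gamma (real (\<tau> + \<omega>) + 1) / \<rho> ^ (\<tau> + \<omega>)
            * (exp (\<Psi> / \<rho>) * upper_Gamma (- real (\<tau> + \<omega>)) (\<Psi> / \<rho>)
               - 1 / a2 ^ (\<tau> + \<omega>) * exp (\<Psi> / (\<rho> * a2))
                 * upper_Gamma (- real (\<tau> + \<omega>)) (\<Psi> / (\<rho> * a2)))))"
  proof (intro sum.cong refl)
    fix k l assume k: "k \<in> tuples Nr msr" and l: "l \<in> tuples Nd msd"
    show "Ct k l * (Dint (nn k l) (Psi k l) \<rho> - Dint (nn k l) (Psi k l) (\<rho>*a2)) =
        (let \<tau> = (\<Sum>\<mu><msr. \<mu> * k (\<mu> + 1));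
             \<omega> = (\<Sum>\<nu><msd. \<nu> * l (\<nu> + 1));
             \<Psi> = real (Nr - k 0) * real msr / \<Omega>sr + real (Nd - l 0) * real msd / \<Omega>sd
         in multinom Nr msr k * multinom Nd msd l * (-1) ^ (Nr + Nd - k 0 - l 0)
            * (\<Prod>\<mu><msr. (1 / fact \<mu>) ^ k (\<mu> + 1)) * (real msr / \<Omega>sr) ^ \<tau>
            * (\<Prod>\<nu><msd. (1 / fact \<nu>) ^ l (\<nu> + 1)) * (real msd / \<Omega>sd) ^ \<omega>
            * Gamma (real (\<tau> + \<omega>) + 1) / \<rho> ^ (\<tau> + \<omega>)
            * (exp (\<Psi> / \<rho>) * upper_Gamma (- real (\<tau> + \<omega>)) (\<Psi> / \<rho>)
               - 1 / a2 ^ (\<tau> + \<omega>) * exp (\<Psi> / (\<rho> * a2))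
                 * upper_Gamma (- real (\<tau> + \<omega>)) (\<Psi> / (\<rho> * a2))))"
      using term_eq[OF r a2(1) assms(6) assms(7) assms(4) k l]
      unfolding Let_def Ct_def Psi_def nn_def tau_def .
  qed
  show ?thesis
    unfolding Let_def
    using LHSeq intH intG sums
    unfolding X_def Let_def by simp
qed


end
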